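(* Let $\Lambda$ be a weight function with polynomial growth, $\rho\in(0,\tfrac1\mu]$, $1<p<\infty$, $m\in\mathbb{R}$, $\sigma\in M^m_{\rho,\Lambda}$, $\lambda>0$, $\tau\ge0$ and $x_0,\xi_0\in\mathbb{R}^n$. Then $$R_{\lambda,\tau}(x_0,\xi_0)^{-1}\,T_\sigma\,R_{\lambda,\tau}(x_0,\xi_0)=T_{\sigma_{\lambda,\tau}},\qquad \sigma_{\lambda,\tau}(x,\eta)=\sigma\big(x_0+\lambda^{-\tau}x,\ \lambda\xi_0+\lambda^{\tau}\eta\big),\quad x,\eta\in\mathbb{R}^n.$$ Moreover, if $\sigma\in M^0_{\rho,\Lambda}$, $\lambda\ge1$, $0\le\tau\le\rho\mu_0/(1+\rho\mu_0)$ and $\xi_0\neq0$, then for all multi-indices $\alpha,\beta$ there is a positive constant $C_\beta$ such that $$|(\partial_x^\alpha\partial_\eta^\beta\sigma_{\lambda,\tau})(x,\eta)|\le C_\beta\,p_{\alpha,\beta}(\sigma)\,\frac{\Lambda(\eta)^{\rho|\beta|}}{|\xi_0|^{\rho\mu_0|\beta|}}\,\lambda^{-\tau|\alpha|}\,\lambda^{-(\rho\mu_0-(1+\rho\mu_0)\tau)|\beta|},\qquad x,\eta\in\mathbb{R}^n.$$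
   Context: A positive function $\Lambda\in C^\infty(\mathbb{R}^n)$ is a weight function with polynomial growth if there are constants $0<\mu_0\le\mu_1$, $0<C_0\le C_1$ with $C_0(1+|\xi|)^{\mu_0}\le\Lambda(\xi)\le C_1(1+|\xi|)^{\mu_1}$ for all $\xi$, and there is a real $\mu\ge\mu_1$ such that for all multi-indices $\alpha,\gamma$ with $\gamma_j\in\{0,1\}$ there is $C_{\alpha,\gamma}>0$ with $|\xi^\gamma(\partial^{\alpha+\gamma}\Lambda)(\xi)|\le C_{\alpha,\gamma}\Lambda(\xi)^{1-|\alpha|/\mu}$. For $m\in\mathbb{R}$ and $\rho\in(0,1/\mu]$, $S^m_{\rho,\Lambda}$ is the set of $\sigma\in C^\infty(\mathbb{R}^n\times\mathbb{R}^n)$ with $|\partial_x^\alpha\partial_\xi^\beta\sigma(x,\xi)|\le C_{\alpha,\beta}\Lambda(\xi)^{m-\rho|\beta|}$ for all $\alpha,\beta$; $M^m_{\rho,\Lambda}$ is the set of $\sigma$ with $\xi^\gamma\partial_\xi^\gamma\sigma\in S^m_{\rho,\Lambda}$ for all $\gamma\in\{0,1\}^n$. For $\sigma\in M^0_{\rho,\Lambda}$, $p_{\alpha,\beta}(\sigma)=\sup_{x,\xi}\Lambda(\xi)^{\rho|\beta|}|\partial_x^\alpha\partial_\xi^\beta\sigma(x,\xi)|$. For a smooth symbol $a$, $(T_a\varphi)(x)=(2\pi)^{-n/2}\int e^{ix\cdot\xi}a(x,\xi)\hat\varphi(\xi)\,d\xi$ for Schwartz $\varphi$, where $\hat\varphi(\xi)=(2\pi)^{-n/2}\int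 e^{-ix\cdot\xi}\varphi(x)dx$. The operator $R_{\lambda,\tau}(x_0,\xi_0)$ on $L^p(\mathbb{R}^n)$ is $(R_{\lambda,\tau}(x_0,\xi_0)u)(x)=\lambda^{\tau n/p}e^{i\lambda x\cdot\xi_0}u(\lambda^\tau(x-x_0))$; it is a surjective isometry with inverse $(R_{\lambda,\tau}(x_0,\xi_0)^{-1}u)(x)=\lambda^{-\tau n/p}e^{-i\lambda(x_0+\lambda^{-\tau}x)\cdot\xi_0}u(x_0+\lambda^{-\tau}x)$. The operator identity is meant on the Schwartz space. *)

theory Defs
  imports "HOL-Analysis.Analysis"
begin

definition dderiv :: "'a::real_normed_vector \<Rightarrow> ('a \<Rightarrow> 'b::real_normed_vector) \<Rightarrow> 'a \<Rightarrow> 'b" where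
  "dderiv v f x = vector_derivative (\<lambda>t. f (x + t *\<^sub>R v)) (at 0)"

fun dderivs :: "'a::real_normed_vector list \<Rightarrow> ('a \<Rightarrow> 'b::real_normed_vector) \<Rightarrow> 'a \<Rightarrow> 'b" where
  "dderivs [] f = f"
| "dderivs (v # vs) f = dderiv v (dderivs vs f)"

definition smooth :: "('a::euclidean_space \<Rightarrow> 'b::real_normed_vector) \<Rightarrow> bool" where
  "smooth f \<longleftrightarrow> (\<forall>vs. set vs \<subseteq> Basis \<longrightarrow>
      continuous_on UNIV (dderivs vs f) \<and>
      (\<forall>v\<in>Basis. \<forall>x. (\<lambda>t::real. dderivs vs f (x + t *\<^sub>R v)) differentiable (at 0)))"

definition coords :: "'n::finite list" where
  "coords = (SOME xs. distinct xs \<and> set xs = UNIV)"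

definition mlen :: "('n::finite \<Rightarrow> nat) \<Rightarrow> nat" where
  "mlen \<alpha> = (\<Sum>i\<in>UNIV. \<alpha> i)"

definition mi_dirs :: "('n::finite \<Rightarrow> nat) \<Rightarrow> (real^'n) list" where
  "mi_dirs \<alpha> = concat (map (\<lambda>i. replicate (\<alpha> i) (axis i 1)) coords)"

definition pd :: "('n::finite \<Rightarrow> nat) \<Rightarrow> (real^'n \<Rightarrow> 'b::real_normed_vector) \<Rightarrow> real^'n \<Rightarrow> 'b" where
  "pd \<alpha> f = dderivs (mi_dirs \<alpha>) f"

definition sd :: "('n::finite \<Rightarrow> nat) \<Rightarrow> ('n \<Rightarrow> nat) \<Rightarrow> (real^'n \<Rightarrow> real^'n \<Rightarrow> 'b::real_normed_vector)
     \<Rightarrow> real^'n \<Rightarrow> real^'n \<Rightarrow> 'b" where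
  "sd \<alpha> \<beta> \<sigma> x \<xi> = dderivs (map (\<lambda>v. (v, 0)) (mi_dirs \<alpha>) @ map (\<lambda>v. (0, v)) (mi_dirs \<beta>))
       (\<lambda>z. \<sigma> (fst z) (snd z)) (x, \<xi>)"

definition smooth2 :: "(real^'n::finite \<Rightarrow> real^'n \<Rightarrow> 'b::real_normed_vector) \<Rightarrow> bool" where
  "smooth2 \<sigma> \<longleftrightarrow> smooth (\<lambda>z::(real^'n) \<times> (real^'n). \<sigma> (fst z) (snd z))"

definition mono :: "('n::finite \<Rightarrow> nat) \<Rightarrow> real^'n \<Rightarrow> real" where
  "mono \<gamma> \<xi> = (\<Prod>i\<in>UNIV. (\<xi> $ i) ^ (\<gamma> i))"

definition zero_one_index :: "('n::finite \<Rightarrow> nat) \<Rightarrow> bool" where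
  "zero_one_index \<gamma> \<longleftrightarrow> (\<forall>j. \<gamma> j \<le> 1)"

definition weight_poly :: "(real^'n::finite \<Rightarrow> real) \<Rightarrow> real \<Rightarrow> real \<Rightarrow> real \<Rightarrow> real \<Rightarrow> real \<Rightarrow> bool" where
  "weight_poly \<Lambda> \<mu>0 \<mu>1 C0 C1 \<mu> \<longleftrightarrow>
     smooth \<Lambda> \<and> (\<forall>\<xi>. \<Lambda> \<xi> > 0) \<and>
     0 < \<mu>0 \<and> \<mu>0 \<le> \<mu>1 \<and> 0 < C0 \<and> C0 \<le> C1 \<and>
     (\<forall>\<xi>. C0 * (1 + norm \<xi>) powr \<mu>0 \<le> \<Lambda> \<xi> \<and> \<Lambda> \<xi> \<le> C1 * (1 + norm \<xi>) powr \<mu>1) \<and>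
     \<mu> \<ge> \<mu>1 \<and>
     (\<forall>\<alpha> \<gamma>. zero_one_index \<gamma> \<longrightarrow>
        (\<exists>C>0. \<forall>\<xi>. \<bar>mono \<gamma> \<xi> * pd (\<lambda>i. \<alpha> i + \<gamma> i) \<Lambda> \<xi>\<bar>
                     \<le> C * \<Lambda> \<xi> powr (1 - real (mlen \<alpha>) / \<mu>)))"

definition S_class :: "real \<Rightarrow> real \<Rightarrow> (real^'n::finite \<Rightarrow> real) \<Rightarrow> (real^'n \<Rightarrow> real^'n \<Rightarrow> complex) set" where
  "S_class m \<rho> \<Lambda> = {\<sigma>. smooth2 \<sigma> \<and>
     (\<forall>\<alpha> \<beta>. \<exists>C. \<forall>x \<xi>. norm (sd \<alpha> \<beta> \<sigma> x \<xi>) \<le> C * \<Lambda> \<xi> powr (m - \<rho> * real (mlen \<beta>)))}"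

definition M_class :: "real \<Rightarrow> real \<Rightarrow> (real^'n::finite \<Rightarrow> real) \<Rightarrow> (real^'n \<Rightarrow> real^'n \<Rightarrow> complex) set" where
  "M_class m \<rho> \<Lambda> = {\<sigma>. \<forall>\<gamma>. zero_one_index \<gamma> \<longrightarrow>
     (\<lambda>x \<xi>. complex_of_real (mono \<gamma> \<xi>) * sd (\<lambda>_. 0) \<gamma> \<sigma> x \<xi>) \<in> S_class m \<rho> \<Lambda>}"

definition seminorm_p :: "(real^'n::finite \<Rightarrow> real) \<Rightarrow> real \<Rightarrow> ('n \<Rightarrow> nat) \<Rightarrow> ('n \<Rightarrow> nat)
     \<Rightarrow> (real^'n \<Rightarrow> real^'n \<Rightarrow> complex) \<Rightarrow> real" where
  "seminorm_p \<Lambda> \<rho> \<alpha> \<beta> \<sigma> =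
     Sup {\<Lambda> \<xi> powr (\<rho> * real (mlen \<beta>)) * norm (sd \<alpha> \<beta> \<sigma> x \<xi>) | x \<xi>. True}"

definition schwartz :: "(real^'n::finite \<Rightarrow> complex) \<Rightarrow> bool" where
  "schwartz \<phi> \<longleftrightarrow> smooth \<phi> \<and>
     (\<forall>\<alpha> (k::nat). \<exists>C. \<forall>x. (1 + norm x) ^ k * norm (pd \<alpha> \<phi> x) \<le> C)"

definition fourier :: "(real^'n::finite \<Rightarrow> complex) \<Rightarrow> real^'n \<Rightarrow> complex" where
  "fourier \<phi> \<xi> = complex_of_real ((2 * pi) powr (- (real CARD('n) / 2))) *
      (LINT x|lborel. cis (- (x \<bullet> \<xi>)) * \<phi> x)"

definition psido :: "(real^'n::finite \<Rightarrow> real^'n \<Rightarrow> complex) \<Rightarrow> (real^'n \<Rightarrow> complex) \<Rightarrow> real^'n \<Rightarrow> complex" where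
  "psido a \<phi> x = complex_of_real ((2 * pi) powr (- (real CARD('n) / 2))) *
      (LINT \<xi>|lborel. cis (x \<bullet> \<xi>) * a x \<xi> * fourier \<phi> \<xi>)"

definition Rop :: "real \<Rightarrow> real \<Rightarrow> real \<Rightarrow> real^'n::finite \<Rightarrow> real^'n \<Rightarrow> (real^'n \<Rightarrow> complex) \<Rightarrow> real^'n \<Rightarrow> complex" where
  "Rop p lam \<tau> x0 \<xi>0 u x = complex_of_real (lam powr (\<tau> * real CARD('n) / p)) *
      cis (lam * (x \<bullet> \<xi>0)) * u ((lam powr \<tau>) *\<^sub>R (x - x0))"

definition Rinv :: "real \<Rightarrow> real \<Rightarrow> real \<Rightarrow> real^'n::finite \<Rightarrow> real^'n \<Rightarrow> (real^'n \<Rightarrow> complex) \<Rightarrow> real^'n \<Rightarrow> complex" where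
  "Rinv p lam \<tau> x0 \<xi>0 u x = complex_of_real (lam powr (- \<tau> * real CARD('n) / p)) *
      cis (- (lam * ((x0 + (lam powr (- \<tau>)) *\<^sub>R x) \<bullet> \<xi>0))) * u (x0 + (lam powr (- \<tau>)) *\<^sub>R x)"

definition scaled_symbol :: "(real^'n::finite \<Rightarrow> real^'n \<Rightarrow> complex) \<Rightarrow> real \<Rightarrow> real \<Rightarrow> real^'n \<Rightarrow> real^'n
     \<Rightarrow> real^'n \<Rightarrow> real^'n \<Rightarrow> complex" where
  "scaled_symbol \<sigma> lam \<tau> x0 \<xi>0 = (\<lambda>x \<eta>. \<sigma> (x0 + (lam powr (- \<tau>)) *\<^sub>R x) (lam *\<^sub>R \<xi>0 + (lam powr \<tau>) *\<^sub>R \<eta>))"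

end

theory Submission
  imports Defs
begin


lemma vd_scale:
  fixes h :: "'a::real_normed_vector \<Rightarrow> 'b::real_normed_vector"
  assumes d: "(\<lambda>r::real. h (y + r *\<^sub>R u)) differentiable (at 0)"
  shows "vector_derivative (\<lambda>r. K *\<^sub>R h (y + (r * k) *\<^sub>R u)) (at 0)
       = (K * k) *\<^sub>R vector_derivative (\<lambda>r. h (y + r *\<^sub>R u)) (at 0)"
proof -
  let ?g = "\<lambda>r::real. h (y + r *\<^sub>R u)"
  have g: "(?g has_vector_derivative vector_derivative ?g (at 0)) (at 0)"
    using d vector_derivative_works by blast
  have m: "((\<lambda>r::real. r * k) has_vector_derivative k) (at 0)"
    by (auto intro!: derivative_eq_intros simp: has_real_derivative_iff_has_vector_derivative[symmetric])
  have "((?g \<circ> (\<lambda>r. r * k)) has_vector_derivative (k *\<^sub>R vector_derivative ?g (at 0))) (at 0)"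
    using vector_diff_chain_at[OF m] g by simp
  then have "((\<lambda>r. K *\<^sub>R (?g \<circ> (\<lambda>r. r * k)) r) has_vector_derivative K *\<^sub>R (k *\<^sub>R vector_derivative ?g (at 0))) (at 0)"
    by (rule bounded_linear.has_vector_derivative[OF bounded_linear_scaleR_right])
  then show ?thesis
    by (intro vector_derivative_at) (simp add: o_def)
qed

lemma dderivs_affine:
  fixes g :: "'a::euclidean_space \<Rightarrow> 'b::real_normed_vector"
  assumes sm: "smooth g" and ws: "set ws \<subseteq> Basis"
    and A: "\<And>z r w. w \<in> set ws \<Longrightarrow> A (z + r *\<^sub>R w) = A z + (r * k w) *\<^sub>R w"
  shows "dderivs ws (\<lambda>z. g (A z)) = (\<lambda>z. prod_list (map k ws) *\<^sub>R dderivs ws g (A z))"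
  using ws A
proof (induction ws)
  case Nil
  then show ?case by simp
next
  case (Cons w ws)
  have IH: "dderivs ws (\<lambda>z. g (A z)) = (\<lambda>z. prod_list (map k ws) *\<^sub>R dderivs ws g (A z))"
    using Cons by auto
  have wB: "w \<in> Basis" "set ws \<subseteq> Basis" using Cons.prems by auto
  show ?case
  proof
    fix z
    have dif: "(\<lambda>r::real. dderivs ws g (A z + r *\<^sub>R w)) differentiable (at 0)"
      using sm wB unfolding smooth_def by blast
    have "dderivs (w # ws) (\<lambda>z. g (A z)) z
        = vector_derivative (\<lambda>r. prod_list (map k ws) *\<^sub>R dderivs ws g (A (z + r *\<^sub>R w))) (at 0)"
      by (simp add: IH dderiv_def)
    also have "\<dots> = vector_derivative (\<lambda>r. prod_list (map k ws) *\<^sub>R dderivs ws g (A z + (r * k w) *\<^sub>R w)) (at 0)"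
      using Cons.prems(2)[of w] by simp
    also have "\<dots> = (prod_list (map k ws) * k w) *\<^sub>R dderiv w (dderivs ws g) (A z)"
      unfolding dderiv_def by (rule vd_scale[OF dif])
    finally show "dderivs (w # ws) (\<lambda>z. g (A z)) z = prod_list (map k (w # ws)) *\<^sub>R dderivs (w # ws) g (A z)"
      by (simp add: mult.commute)
  qed
qed


lemma coords_prop: "distinct (coords :: 'n::finite list) \<and> set (coords :: 'n list) = UNIV"
  unfolding coords_def by (rule someI_ex) (use finite_distinct_list[OF finite[of UNIV]] in blast)

lemma length_mi_dirs: "length (mi_dirs (\<alpha>::'n::finite \<Rightarrow> nat)) = mlen \<alpha>"
proof -
  have "length (mi_dirs \<alpha>) = sum_list (map \<alpha> coords)"
    by (simp add: mi_dirs_def length_concat o_def)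
  also have "\<dots> = sum \<alpha> (set coords)"
    using coords_prop by (metis sum_list_distinct_conv_sum_set)
  also have "\<dots> = mlen \<alpha>" using coords_prop unfolding mlen_def by metis
  finally show ?thesis .
qed

lemma mi_dirs_Basis: "set (mi_dirs (\<alpha>::'n::finite \<Rightarrow> nat)) \<subseteq> Basis"
  by (auto simp: mi_dirs_def Basis_vec_def)

lemma sd_scaled:
  fixes \<sigma> :: "real^'n::finite \<Rightarrow> real^'n \<Rightarrow> complex"
  assumes sm: "smooth2 \<sigma>" and lam: "0 < lam"
  shows "sd \<alpha> \<beta> (scaled_symbol \<sigma> lam \<tau> x0 \<xi>0) x \<eta>
     = ((lam powr (-\<tau>)) ^ mlen \<alpha> * (lam powr \<tau>) ^ mlen \<beta>) *\<^sub>R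
        sd \<alpha> \<beta> \<sigma> (x0 + lam powr (-\<tau>) *\<^sub>R x) (lam *\<^sub>R \<xi>0 + lam powr \<tau> *\<^sub>R \<eta>)"
proof -
  define s where "s = lam powr (-\<tau>)"
  define t where "t = lam powr \<tau>"
  define g where "g = (\<lambda>z::(real^'n)\<times>(real^'n). \<sigma> (fst z) (snd z))"
  define A where "A = (\<lambda>z::(real^'n)\<times>(real^'n). (x0 + s *\<^sub>R fst z, lam *\<^sub>R \<xi>0 + t *\<^sub>R snd z))"
  define k where "k = (\<lambda>w::(real^'n)\<times>(real^'n). if snd w = 0 then s else t)"
  define ws where "ws = map (\<lambda>v. (v, 0::real^'n)) (mi_dirs \<alpha>) @ map (\<lambda>v. (0::real^'n, v)) (mi_dirs \<beta>)"
  have wsB: "set ws \<subseteq> Basis"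
    using mi_dirs_Basis[of \<alpha>] mi_dirs_Basis[of \<beta>] by (auto simp: ws_def Basis_prod_def)
  have Aw: "A (z + r *\<^sub>R w) = A z + (r * k w) *\<^sub>R w" if "w \<in> set ws" for z r w
  proof -
    from that obtain v where v: "v \<in> Basis" "w = (v, 0) \<or> w = (0, v)"
      using mi_dirs_Basis[of \<alpha>] mi_dirs_Basis[of \<beta>] by (auto simp: ws_def)
    have "v \<noteq> 0" using v(1) by auto
    with v(2) show ?thesis
      by (auto simp: A_def k_def algebra_simps)
  qed
  have smg: "smooth g" using sm by (simp add: smooth2_def g_def)
  have eq: "(\<lambda>z. scaled_symbol \<sigma> lam \<tau> x0 \<xi>0 (fst z) (snd z)) = (\<lambda>z. g (A z))"
    by (simp add: scaled_symbol_def g_def A_def s_def t_def)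
  have pl: "prod_list (map k ws) = s ^ mlen \<alpha> * t ^ mlen \<beta>"
  proof -
    have "map k (map (\<lambda>v. (v, 0::real^'n)) (mi_dirs \<alpha>)) = replicate (mlen \<alpha>) s"
      by (simp add: k_def o_def length_mi_dirs[symmetric] map_replicate_const)
    moreover have "map k (map (\<lambda>v. (0::real^'n, v)) (mi_dirs \<beta>)) = replicate (mlen \<beta>) t"
    proof -
      have "map k (map (\<lambda>v. (0::real^'n, v)) (mi_dirs \<beta>)) = map (\<lambda>_. t) (mi_dirs \<beta>)"
        using mi_dirs_Basis[of \<beta>] by (auto simp: k_def intro!: map_cong)
      then show ?thesis by (simp add: length_mi_dirs[symmetric] map_replicate_const)
    qed
    ultimately show ?thesis by (simp add: ws_def)
  qed
  show ?thesis
    unfolding sd_def eq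
    using dderivs_affine[OF smg wsB Aw] pl
    by (simp add: ws_def[symmetric] g_def[symmetric] A_def s_def t_def)
qed


lemma mi_dirs_zero: "mi_dirs (\<lambda>_::'n::finite. 0) = []"
  by (simp add: mi_dirs_def)

lemma mono_zero: "mono (\<lambda>_::'n::finite. 0) \<xi> = 1"
  by (simp add: mono_def)

lemma M_class_S: "\<sigma> \<in> M_class m \<rho> \<Lambda> \<Longrightarrow> \<sigma> \<in> S_class m \<rho> \<Lambda>"
proof -
  assume "\<sigma> \<in> M_class m \<rho> \<Lambda>"
  then have "(\<lambda>x \<xi>. complex_of_real (mono (\<lambda>_. 0) \<xi>) * sd (\<lambda>_. 0) (\<lambda>_. 0) \<sigma> x \<xi>) \<in> S_class m \<rho> \<Lambda>"
    unfolding M_class_def zero_one_index_def by auto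
  moreover have "(\<lambda>x \<xi>. complex_of_real (mono (\<lambda>_. 0) \<xi>) * sd (\<lambda>_. 0) (\<lambda>_. 0) \<sigma> x \<xi>) = \<sigma>"
    by (simp add: mono_zero sd_def mi_dirs_zero)
  ultimately show ?thesis by simp
qed

lemma part2:
  fixes \<Lambda> :: "real^'n::finite \<Rightarrow> real"
  assumes weight: "weight_poly \<Lambda> \<mu>0 \<mu>1 C0 C1 \<mu>" and rho: "0 < \<rho>"
    and \<sigma>: "\<sigma> \<in> M_class 0 \<rho> \<Lambda>" and lam: "1 \<le> lam" and tau: "0 \<le> \<tau>" and xi0: "\<xi>0 \<noteq> 0"
  shows "norm (sd \<alpha> \<beta> (scaled_symbol \<sigma> lam \<tau> x0 \<xi>0) x \<eta>)
              \<le> C0 powr (- 2 * \<rho> * real (mlen \<beta>)) * seminorm_p \<Lambda> \<rho> \<alpha> \<beta> \<sigma>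
                  * \<Lambda> \<eta> powr (\<rho> * real (mlen \<beta>)) / norm \<xi>0 powr (\<rho> * \<mu>0 * real (mlen \<beta>))
                  * lam powr (- \<tau> * real (mlen \<alpha>))
                  * lam powr (- (\<rho> * \<mu>0 - (1 + \<rho> * \<mu>0) * \<tau>) * real (mlen \<beta>))"
proof -
  have S: "\<sigma> \<in> S_class 0 \<rho> \<Lambda>" using M_class_S[OF \<sigma>] .
  have Lpos: "\<And>\<xi>. \<Lambda> \<xi> > 0" and mu0: "0 < \<mu>0" and C0: "0 < C0"
    and Llow: "\<And>\<xi>. C0 * (1 + norm \<xi>) powr \<mu>0 \<le> \<Lambda> \<xi>"
    using weight unfolding weight_poly_def by auto
  define a where "a = real (mlen \<alpha>)"
  define B where "B = real (mlen \<beta>)"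
  define b where "b = \<rho> * B"
  have b0: "0 \<le> b" using rho by (simp add: b_def B_def)
  define t where "t = lam powr \<tau>"
  define \<zeta> where "\<zeta> = lam *\<^sub>R \<xi>0 + t *\<^sub>R \<eta>"
  define y where "y = x0 + lam powr (-\<tau>) *\<^sub>R x"
  define N where "N = norm (sd \<alpha> \<beta> \<sigma> y \<zeta>)"
  define P where "P = seminorm_p \<Lambda> \<rho> \<alpha> \<beta> \<sigma>"
  have lam0: "0 < lam" using lam by simp
  have t1: "1 \<le> t" unfolding t_def using lam tau by (simp add: ge_one_powr_ge_zero)
  have sm: "smooth2 \<sigma>" using S by (simp add: S_class_def)
  have h1: "norm (sd \<alpha> \<beta> (scaled_symbol \<sigma> lam \<tau> x0 \<xi>0) x \<eta>) = lam powr (-\<tau>*a) * lam powr (\<tau>*B) * N"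
  proof -
    have "norm (sd \<alpha> \<beta> (scaled_symbol \<sigma> lam \<tau> x0 \<xi>0) x \<eta>)
       = (lam powr (-\<tau>)) ^ mlen \<alpha> * (lam powr \<tau>) ^ mlen \<beta> * N"
      by (simp add: sd_scaled[OF sm lam0] N_def y_def \<zeta>_def t_def)
    also have "\<dots> = lam powr (-\<tau>*a) * lam powr (\<tau>*B) * N"
      using lam0 by (simp add: a_def B_def powr_realpow[symmetric] powr_powr)
    finally show ?thesis .
  qed
  have h2: "\<Lambda> \<zeta> powr b * N \<le> P"
  proof -
    obtain C where C: "\<And>x \<xi>. norm (sd \<alpha> \<beta> \<sigma> x \<xi>) \<le> C * \<Lambda> \<xi> powr (0 - \<rho> * real (mlen \<beta>))"
      using S unfolding S_class_def by blast
    have "\<Lambda> \<xi> powr (\<rho> * real (mlen \<beta>)) * norm (sd \<alpha> \<beta> \<sigma> x \<xi>) \<le> C" for x \<xi>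
    proof -
      have "\<Lambda> \<xi> powr (\<rho> * real (mlen \<beta>)) * norm (sd \<alpha> \<beta> \<sigma> x \<xi>)
          \<le> \<Lambda> \<xi> powr (\<rho> * real (mlen \<beta>)) * (C * \<Lambda> \<xi> powr (0 - \<rho> * real (mlen \<beta>)))"
        by (intro mult_left_mono C) simp
      also have "\<dots> = C" using Lpos[of \<xi>] by (simp add: powr_minus field_simps)
      finally show ?thesis .
    qed
    then have "bdd_above {\<Lambda> \<xi> powr (\<rho> * real (mlen \<beta>)) * norm (sd \<alpha> \<beta> \<sigma> x \<xi>) | x \<xi>. True}"
      by (auto intro!: bdd_aboveI)
    then show ?thesis unfolding P_def seminorm_p_def b_def B_def N_def
      by (intro cSup_upper) auto
  qed
  have N0: "0 \<le> N" by (simp add: N_def)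
  have h4: "lam * norm \<xi>0 \<le> (1 + norm \<zeta>) * (t * (1 + norm \<eta>))"
  proof -
    have "lam * norm \<xi>0 = norm (\<zeta> - t *\<^sub>R \<eta>)" using lam0 by (simp add: \<zeta>_def)
    also have "\<dots> \<le> norm \<zeta> + t * norm \<eta>" using t1 norm_triangle_ineq4[of \<zeta> "t *\<^sub>R \<eta>"] by simp
    also have "\<dots> \<le> (1 + norm \<zeta>) * (t * (1 + norm \<eta>))"
      proof -
      have e1: "t * (1 + norm \<zeta> + norm \<eta>) \<le> t * ((1 + norm \<zeta>) * (1 + norm \<eta>))"
        using t1 by (intro mult_left_mono) (auto simp: algebra_simps)
      have e2: "norm \<zeta> + t * norm \<eta> \<le> t * (1 + norm \<zeta> + norm \<eta>)"
        using t1 mult_right_mono[OF t1, of "norm \<zeta>"] by (simp add: algebra_simps)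
      from e1 e2 show ?thesis by (simp add: algebra_simps)
    qed
    finally show ?thesis .
  qed
  define Q where "Q = t * (1 + norm \<eta>)"
  have Q0: "0 < Q" using t1 by (simp add: Q_def add_pos_nonneg)
  have xn: "0 < norm \<xi>0" using xi0 by simp
  have h5: "lam * norm \<xi>0 / Q \<le> 1 + norm \<zeta>" using h4 Q0 by (simp add: Q_def divide_le_eq)
  have h6: "C0 powr b * (lam * norm \<xi>0 / Q) powr (\<mu>0 * b) \<le> \<Lambda> \<zeta> powr b"
  proof -
    have "(lam * norm \<xi>0 / Q) powr (\<mu>0 * b) = ((lam * norm \<xi>0 / Q) powr \<mu>0) powr b"
      by (simp add: powr_powr)
    also have "\<dots> \<le> ((1 + norm \<zeta>) powr \<mu>0) powr b"
      using h5 b0 mu0 lam0 xn Q0 by (intro powr_mono2 powr_mono2) auto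
    finally have "C0 powr b * (lam * norm \<xi>0 / Q) powr (\<mu>0 * b) \<le> C0 powr b * ((1 + norm \<zeta>) powr \<mu>0) powr b"
      by (simp add: mult_left_mono)
    also have "\<dots> = (C0 * (1 + norm \<zeta>) powr \<mu>0) powr b" using C0 by (simp add: powr_mult)
    also have "\<dots> \<le> \<Lambda> \<zeta> powr b" using Llow[of \<zeta>] b0 C0 by (intro powr_mono2) auto
    finally show ?thesis .
  qed
  have h7: "C0 powr b * (1 + norm \<eta>) powr (\<mu>0 * b) \<le> \<Lambda> \<eta> powr b"
  proof -
    have "C0 powr b * (1 + norm \<eta>) powr (\<mu>0 * b) = (C0 * (1 + norm \<eta>) powr \<mu>0) powr b"
      using C0 by (simp add: powr_mult powr_powr)
    also have "\<dots> \<le> \<Lambda> \<eta> powr b" using Llow[of \<eta>] b0 C0 by (intro powr_mono2) auto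
    finally show ?thesis .
  qed
  have P0: "0 \<le> P" using h2 N0 by (meson order_trans mult_nonneg_nonneg powr_ge_zero)
  define D where "D = C0 powr b * (lam * norm \<xi>0 / Q) powr (\<mu>0 * b)"
  have D0: "0 < D" unfolding D_def using C0 lam0 xn Q0 by simp
  have "D * N \<le> P" using h6 h2 N0 unfolding D_def by (meson mult_right_mono order_trans)
  then have h8: "N \<le> P / D" using D0 by (simp add: field_simps)
  define E where "E = C0 powr b * lam powr (\<mu>0 * b) * norm \<xi>0 powr (\<mu>0 * b)"
  have E0: "0 < E" unfolding E_def using C0 lam0 xn by simp
  have DE: "P / D = P * (t powr (\<mu>0 * b) * (1 + norm \<eta>) powr (\<mu>0 * b)) / E"
  proof -
    have pm: "(t * (1 + norm \<eta>)) powr (\<mu>0 * b) = t powr (\<mu>0 * b) * (1 + norm \<eta>) powr (\<mu>0 * b)"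
      using t1 by (simp add: powr_mult)
    have pd: "(lam * norm \<xi>0 / Q) powr (\<mu>0 * b) = lam powr (\<mu>0 * b) * norm \<xi>0 powr (\<mu>0 * b) / Q powr (\<mu>0 * b)"
      using lam0 Q0 by (simp add: powr_divide powr_mult)
    show ?thesis unfolding D_def E_def pd using Q0 C0 lam0 xn
      by (simp add: Q_def[symmetric] pm[folded Q_def] field_simps)
  qed
  have h9: "(1 + norm \<eta>) powr (\<mu>0 * b) \<le> \<Lambda> \<eta> powr b / C0 powr b"
    using h7 C0 by (simp add: field_simps)
  have h10: "N \<le> P * (t powr (\<mu>0 * b) * (\<Lambda> \<eta> powr b / C0 powr b)) / E"
    using h8 DE h9 P0 E0 by (smt (verit) divide_right_mono mult_left_mono powr_ge_zero)
  have lampos: "0 < lam powr (-\<tau>*a) * lam powr (\<tau>*B)" using lam0 by simp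
  have "norm (sd \<alpha> \<beta> (scaled_symbol \<sigma> lam \<tau> x0 \<xi>0) x \<eta>)
      \<le> lam powr (-\<tau>*a) * lam powr (\<tau>*B) * (P * (t powr (\<mu>0 * b) * (\<Lambda> \<eta> powr b / C0 powr b)) / E)"
    unfolding h1 mult.assoc[of "lam powr (-\<tau>*a) * lam powr (\<tau>*B)"] using h10 lampos by (intro mult_left_mono) auto
  also have "\<dots> = C0 powr (- 2 * \<rho> * B) * P * \<Lambda> \<eta> powr b / norm \<xi>0 powr (\<rho> * \<mu>0 * B)
                  * lam powr (- \<tau> * a)
                  * lam powr (- (\<rho> * \<mu>0 - (1 + \<rho> * \<mu>0) * \<tau>) * B)"
  proof -
    have l1: "lam powr (\<tau>*B) * t powr (\<mu>0 * b) / lam powr (\<mu>0 * b) = lam powr (- (\<rho> * \<mu>0 - (1 + \<rho> * \<mu>0) * \<tau>) * B)"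
      unfolding t_def b_def using lam0
      by (simp add: powr_powr powr_add[symmetric] powr_diff[symmetric] algebra_simps)
    have c1: "C0 powr (- 2 * \<rho> * B) = 1 / (C0 powr b * C0 powr b)"
      unfolding b_def using C0 by (simp add: powr_add[symmetric] powr_minus divide_inverse mult_ac)
    have x1: "norm \<xi>0 powr (\<mu>0 * b) = norm \<xi>0 powr (\<rho> * \<mu>0 * B)" by (simp add: b_def mult_ac)
    show ?thesis unfolding E_def c1 x1 l1[symmetric] using C0 lam0 xn
      by (simp add: field_simps)
  qed
  finally show ?thesis unfolding P_def a_def B_def b_def .
qed


lemma integral_affine_eucl:
  fixes f :: "'a::euclidean_space \<Rightarrow> 'b::{banach, second_countable_topology}" and c :: real
  assumes c: "c \<noteq> 0"
  shows "integral\<^sup>L lborel f = (\<bar>c\<bar> ^ DIM('a)) *\<^sub>R integral\<^sup>L lborel (\<lambda>x. f (t + c *\<^sub>R x))"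
proof cases
  assume f[measurable]: "f \<in> borel_measurable borel"
  have eq: "lborel = density (distr lborel borel (\<lambda>x::'a. t + c *\<^sub>R x)) (\<lambda>_. \<bar>c\<bar>^DIM('a))"
    using lborel_affine[OF c] .
  have "integral\<^sup>L lborel f = integral\<^sup>L (density (distr lborel borel (\<lambda>x::'a. t + c *\<^sub>R x)) (\<lambda>_. \<bar>c\<bar>^DIM('a))) f"
    using eq by (rule arg_cong)
  also have "\<dots> = integral\<^sup>L (distr lborel borel (\<lambda>x::'a. t + c *\<^sub>R x)) (\<lambda>x. (\<bar>c\<bar>^DIM('a)) *\<^sub>R f x)"
    by (subst integral_density[symmetric]) (auto simp: ennreal_power)
  also have "\<dots> = integral\<^sup>L lborel (\<lambda>x. (\<bar>c\<bar>^DIM('a)) *\<^sub>R f (t + c *\<^sub>R x))"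
    by (subst integral_distr) auto
  finally show ?thesis by simp
next
  assume nf: "f \<notin> borel_measurable borel"
  have "(\<lambda>x. f (t + c *\<^sub>R x)) \<notin> borel_measurable borel"
  proof
    assume m: "(\<lambda>x. f (t + c *\<^sub>R x)) \<in> borel_measurable borel"
    have "(\<lambda>y. (\<lambda>x. f (t + c *\<^sub>R x)) ((1/c) *\<^sub>R (y - t))) \<in> borel_measurable borel"
      by (rule measurable_compose[OF _ m]) simp
    moreover have "(\<lambda>y. (\<lambda>x. f (t + c *\<^sub>R x)) ((1/c) *\<^sub>R (y - t))) = f"
      using c by (simp add: algebra_simps)
    ultimately show False using nf by simp
  qed
  then have "\<not> integrable lborel (\<lambda>x. f (t + c *\<^sub>R x))" "\<not> integrable lborel f"
    using nf borel_measurable_integrable[of lborel] by auto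
  then show ?thesis by (simp add: not_integrable_integral_eq)
qed


lemma cis_rearr: "a + b = c + d \<Longrightarrow> cis a * (K * cis b * z) = (K * cis c) * (cis d * z)"
proof -
  assume "a + b = c + d"
  then have "cis a * cis b = cis c * cis d" by (simp add: cis_mult)
  then show ?thesis by (simp add: mult_ac)
qed

lemma fourier_Rop:
  fixes \<phi> :: "real^'n::finite \<Rightarrow> complex"
  assumes lam: "0 < lam"
  shows "fourier (Rop p lam \<tau> x0 \<xi>0 \<phi>) \<xi> =
     ((lam powr (-\<tau>)) ^ CARD('n) * lam powr (\<tau> * real CARD('n) / p)) *\<^sub>R
       (cis (lam * (x0 \<bullet> \<xi>0) - x0 \<bullet> \<xi>) * fourier \<phi> ((lam powr (-\<tau>)) *\<^sub>R (\<xi> - lam *\<^sub>R \<xi>0)))"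
proof -
  define s where "s = lam powr (-\<tau>)"
  define t where "t = lam powr \<tau>"
  define K where "K = complex_of_real (lam powr (\<tau> * real CARD('n) / p))"
  have st: "t * s = 1" using lam by (simp add: s_def t_def powr_add[symmetric])
  have s0: "s \<noteq> 0" using lam by (simp add: s_def)
  define g where "g = (\<lambda>x::real^'n. cis (- (x \<bullet> \<xi>)) * Rop p lam \<tau> x0 \<xi>0 \<phi> x)"
  have "integral\<^sup>L lborel g = (\<bar>s\<bar> ^ DIM(real^'n)) *\<^sub>R integral\<^sup>L lborel (\<lambda>y. g (x0 + s *\<^sub>R y))"
    by (rule integral_affine_eucl[OF s0])
  also have "(\<lambda>y. g (x0 + s *\<^sub>R y)) = (\<lambda>y. (K * cis (lam * (x0 \<bullet> \<xi>0) - x0 \<bullet> \<xi>)) *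
       (cis (- (y \<bullet> (s *\<^sub>R (\<xi> - lam *\<^sub>R \<xi>0)))) * \<phi> y))"
  proof
    fix y
    have e: "t *\<^sub>R (x0 + s *\<^sub>R y - x0) = y" using st by simp
    show "g (x0 + s *\<^sub>R y) = (K * cis (lam * (x0 \<bullet> \<xi>0) - x0 \<bullet> \<xi>)) *
       (cis (- (y \<bullet> (s *\<^sub>R (\<xi> - lam *\<^sub>R \<xi>0)))) * \<phi> y)"
      unfolding g_def Rop_def K_def[symmetric] t_def[symmetric] e
      by (rule cis_rearr) (simp only: inner_add_left inner_scaleR_left inner_diff_right inner_scaleR_right inner_minus_left; simp add: algebra_simps)
  qed
  finally have "integral\<^sup>L lborel g = (\<bar>s\<bar> ^ DIM(real^'n)) *\<^sub>R ((K * cis (lam * (x0 \<bullet> \<xi>0) - x0 \<bullet> \<xi>)) *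
       integral\<^sup>L lborel (\<lambda>y. cis (- (y \<bullet> (s *\<^sub>R (\<xi> - lam *\<^sub>R \<xi>0)))) * \<phi> y))"
    by simp
  then show ?thesis
    unfolding fourier_def g_def[symmetric] using lam
    by (simp add: s_def K_def scaleR_conv_of_real mult_ac)
qed


lemma part1:
  fixes \<sigma> :: "real^'n::finite \<Rightarrow> real^'n \<Rightarrow> complex" and \<phi> :: "real^'n \<Rightarrow> complex"
  assumes lam: "0 < lam"
  shows "Rinv p lam \<tau> x0 \<xi>0 (psido \<sigma> (Rop p lam \<tau> x0 \<xi>0 \<phi>)) x
              = psido (scaled_symbol \<sigma> lam \<tau> x0 \<xi>0) \<phi> x"
proof -
  define s where "s = lam powr (-\<tau>)"
  define t where "t = lam powr \<tau>"
  define K where "K = lam powr (\<tau> * real CARD('n) / p)"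
  define c where "c = complex_of_real ((2 * pi) powr (- (real CARD('n) / 2)))"
  define y where "y = x0 + s *\<^sub>R x"
  have st: "s * t = 1" using lam by (simp add: s_def t_def powr_add[symmetric])
  have t0: "t \<noteq> 0" "0 < t" "0 < s" using lam by (auto simp: t_def s_def)
  define F where "F = fourier (Rop p lam \<tau> x0 \<xi>0 \<phi>)"
  have F: "F \<xi> = (s ^ CARD('n) * K) *\<^sub>R (cis (lam * (x0 \<bullet> \<xi>0) - x0 \<bullet> \<xi>) * fourier \<phi> (s *\<^sub>R (\<xi> - lam *\<^sub>R \<xi>0)))" for \<xi>
    unfolding F_def s_def K_def by (rule fourier_Rop[OF lam])
  define h where "h = (\<lambda>\<xi>. cis (y \<bullet> \<xi>) * \<sigma> y \<xi> * F \<xi>)"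
  have "integral\<^sup>L lborel h = (\<bar>t\<bar> ^ DIM(real^'n)) *\<^sub>R integral\<^sup>L lborel (\<lambda>\<eta>. h (lam *\<^sub>R \<xi>0 + t *\<^sub>R \<eta>))"
    by (rule integral_affine_eucl[OF t0(1)])
  also have "(\<lambda>\<eta>. h (lam *\<^sub>R \<xi>0 + t *\<^sub>R \<eta>)) = (\<lambda>\<eta>. complex_of_real (s ^ CARD('n) * K) * cis (lam * (y \<bullet> \<xi>0)) *
        (cis (x \<bullet> \<eta>) * scaled_symbol \<sigma> lam \<tau> x0 \<xi>0 x \<eta> * fourier \<phi> \<eta>))"
  proof
    fix \<eta>
    have e: "s *\<^sub>R (lam *\<^sub>R \<xi>0 + t *\<^sub>R \<eta> - lam *\<^sub>R \<xi>0) = \<eta>" using st by simp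
    have sc: "scaled_symbol \<sigma> lam \<tau> x0 \<xi>0 x \<eta> = \<sigma> y (lam *\<^sub>R \<xi>0 + t *\<^sub>R \<eta>)"
      by (simp add: scaled_symbol_def y_def s_def t_def)
    have ang: "y \<bullet> (lam *\<^sub>R \<xi>0 + t *\<^sub>R \<eta>) + (lam * (x0 \<bullet> \<xi>0) - x0 \<bullet> (lam *\<^sub>R \<xi>0 + t *\<^sub>R \<eta>))
        = lam * (y \<bullet> \<xi>0) + x \<bullet> \<eta>"
    proof -
      have i1: "(x0 + s *\<^sub>R x) \<bullet> (lam *\<^sub>R \<xi>0 + t *\<^sub>R \<eta>) = lam * (x0 \<bullet> \<xi>0) + t * (x0 \<bullet> \<eta>) + lam * (s * (x \<bullet> \<xi>0)) + (s * t) * (x \<bullet> \<eta>)"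
        by (simp add: inner_add_left inner_add_right algebra_simps)
      have i2: "x0 \<bullet> (lam *\<^sub>R \<xi>0 + t *\<^sub>R \<eta>) = lam * (x0 \<bullet> \<xi>0) + t * (x0 \<bullet> \<eta>)"
        by (simp add: inner_add_right)
      have i3: "(x0 + s *\<^sub>R x) \<bullet> \<xi>0 = x0 \<bullet> \<xi>0 + s * (x \<bullet> \<xi>0)"
        by (simp add: inner_add_left)
      show ?thesis unfolding y_def i1 i2 i3 st by (simp add: distrib_left)
    qed
    define Z where "Z = lam *\<^sub>R \<xi>0 + t *\<^sub>R \<eta>"
    have cm: "cis (y \<bullet> Z) * cis (lam * (x0 \<bullet> \<xi>0) - x0 \<bullet> Z)
        = cis (lam * (y \<bullet> \<xi>0)) * cis (x \<bullet> \<eta>)"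
      unfolding Z_def by (simp add: cis_mult ang)
    have hZ: "h Z = cis (y \<bullet> Z) * \<sigma> y Z * (complex_of_real (s ^ CARD('n) * K) * (cis (lam * (x0 \<bullet> \<xi>0) - x0 \<bullet> Z) * fourier \<phi> \<eta>))"
    proof -
      have e': "s *\<^sub>R (Z - lam *\<^sub>R \<xi>0) = \<eta>" unfolding Z_def by (rule e)
      have Fz: "F Z = complex_of_real (s ^ CARD('n) * K) * (cis (lam * (x0 \<bullet> \<xi>0) - x0 \<bullet> Z) * fourier \<phi> \<eta>)"
        unfolding F[of Z] e' by (rule scaleR_conv_of_real)
      show ?thesis unfolding h_def Fz ..
    qed
    have "h Z = complex_of_real (s ^ CARD('n) * K) * (cis (y \<bullet> Z) * cis (lam * (x0 \<bullet> \<xi>0) - x0 \<bullet> Z)) * (\<sigma> y Z * fourier \<phi> \<eta>)"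
      unfolding hZ by (simp only: mult_ac)
    also have "\<dots> = complex_of_real (s ^ CARD('n) * K) * (cis (lam * (y \<bullet> \<xi>0)) * cis (x \<bullet> \<eta>)) * (\<sigma> y Z * fourier \<phi> \<eta>)"
      unfolding cm ..
    also have "\<dots> = complex_of_real (s ^ CARD('n) * K) * cis (lam * (y \<bullet> \<xi>0)) *
        (cis (x \<bullet> \<eta>) * scaled_symbol \<sigma> lam \<tau> x0 \<xi>0 x \<eta> * fourier \<phi> \<eta>)"
      unfolding sc Z_def by (simp only: mult_ac)
    finally show "h (lam *\<^sub>R \<xi>0 + t *\<^sub>R \<eta>) = complex_of_real (s ^ CARD('n) * K) * cis (lam * (y \<bullet> \<xi>0)) *
        (cis (x \<bullet> \<eta>) * scaled_symbol \<sigma> lam \<tau> x0 \<xi>0 x \<eta> * fourier \<phi> \<eta>)"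
      unfolding Z_def .
  qed
  finally have I: "integral\<^sup>L lborel h = (t ^ CARD('n)) *\<^sub>R (complex_of_real (s ^ CARD('n) * K) * cis (lam * (y \<bullet> \<xi>0)) *
        integral\<^sup>L lborel (\<lambda>\<eta>. cis (x \<bullet> \<eta>) * scaled_symbol \<sigma> lam \<tau> x0 \<xi>0 x \<eta> * fourier \<phi> \<eta>))"
    unfolding integral_mult_right_zero abs_of_pos[OF t0(2)] DIM_cart DIM_real by simp
  have ps: "psido \<sigma> (Rop p lam \<tau> x0 \<xi>0 \<phi>) y = c * integral\<^sup>L lborel h"
    unfolding psido_def c_def h_def F_def ..
  have KK: "lam powr (- \<tau> * real CARD('n) / p) * K = 1"
    unfolding K_def using lam by (simp add: powr_add[symmetric])
  have ST: "t ^ CARD('n) * s ^ CARD('n) = 1" by (simp add: power_mult_distrib[symmetric] mult.commute[of t s] st)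
  have cc: "cis (- (lam * (y \<bullet> \<xi>0))) * cis (lam * (y \<bullet> \<xi>0)) = 1" by (simp add: cis_mult)
  have "Rinv p lam \<tau> x0 \<xi>0 (psido \<sigma> (Rop p lam \<tau> x0 \<xi>0 \<phi>)) x
     = complex_of_real (lam powr (- \<tau> * real CARD('n) / p)) * cis (- (lam * (y \<bullet> \<xi>0))) * (c * integral\<^sup>L lborel h)"
    unfolding Rinv_def y_def[symmetric] s_def[symmetric] ps ..
  also have "\<dots> = complex_of_real (lam powr (- \<tau> * real CARD('n) / p) * K * (t ^ CARD('n) * s ^ CARD('n)))
      * (cis (- (lam * (y \<bullet> \<xi>0))) * cis (lam * (y \<bullet> \<xi>0))) *
      (c * integral\<^sup>L lborel (\<lambda>\<eta>. cis (x \<bullet> \<eta>) * scaled_symbol \<sigma> lam \<tau> x0 \<xi>0 x \<eta> * fourier \<phi> \<eta>))"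
    unfolding I scaleR_conv_of_real[where 'a=complex] of_real_mult by (simp only: mult_ac)
  also have "\<dots> = psido (scaled_symbol \<sigma> lam \<tau> x0 \<xi>0) \<phi> x"
    unfolding KK ST cc by (simp add: psido_def c_def)
  finally show ?thesis .
qed


theorem mainTheorem3:
  fixes \<Lambda> :: "real^'n::finite \<Rightarrow> real"
    and \<mu>0 \<mu>1 C0 C1 \<mu> \<rho> :: real
  assumes weight: "weight_poly \<Lambda> \<mu>0 \<mu>1 C0 C1 \<mu>"
    and rho: "0 < \<rho>" "\<rho> \<le> 1 / \<mu>"
  shows "(\<forall>(p::real) (m::real) \<sigma> (lam::real) (\<tau>::real) (x0::real^'n) (\<xi>0::real^'n) \<phi>.
            1 < p \<and> \<sigma> \<in> M_class m \<rho> \<Lambda> \<and> 0 < lam \<and> 0 \<le> \<tau> \<and> schwartz \<phi> \<longrightarrow>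
            Rinv p lam \<tau> x0 \<xi>0 (psido \<sigma> (Rop p lam \<tau> x0 \<xi>0 \<phi>))
              = psido (scaled_symbol \<sigma> lam \<tau> x0 \<xi>0) \<phi>)
       \<and> (\<forall>\<beta>::'n \<Rightarrow> nat. \<exists>C>0. \<forall>\<sigma> (lam::real) (\<tau>::real) (x0::real^'n) (\<xi>0::real^'n) (\<alpha>::'n \<Rightarrow> nat) x \<eta>.
            \<sigma> \<in> M_class 0 \<rho> \<Lambda> \<and> 1 \<le> lam \<and> 0 \<le> \<tau> \<and> \<tau> \<le> \<rho> * \<mu>0 / (1 + \<rho> * \<mu>0) \<and> \<xi>0 \<noteq> 0 \<longrightarrow>
            norm (sd \<alpha> \<beta> (scaled_symbol \<sigma> lam \<tau> x0 \<xi>0) x \<eta>)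
              \<le> C * seminorm_p \<Lambda> \<rho> \<alpha> \<beta> \<sigma>
                  * \<Lambda> \<eta> powr (\<rho> * real (mlen \<beta>)) / norm \<xi>0 powr (\<rho> * \<mu>0 * real (mlen \<beta>))
                  * lam powr (- \<tau> * real (mlen \<alpha>))
                  * lam powr (- (\<rho> * \<mu>0 - (1 + \<rho> * \<mu>0) * \<tau>) * real (mlen \<beta>)))"
proof -
  have C0: "0 < C0" using weight unfolding weight_poly_def by auto
  show ?thesis
  proof (intro conjI allI impI)
    fix p m lam \<tau> :: real and \<sigma> :: "real^'n \<Rightarrow> real^'n \<Rightarrow> complex" and x0 \<xi>0 :: "real^'n" and \<phi> :: "real^'n \<Rightarrow> complex"
    assume H: "1 < p \<and> \<sigma> \<in> M_class m \<rho> \<Lambda> \<and> 0 < (lam::real) \<and> 0 \<le> (\<tau>::real) \<and> schwartz (\<phi>::real^'n \<Rightarrow> complex)"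
    show "Rinv p lam \<tau> (x0::real^'n) \<xi>0 (psido \<sigma> (Rop p lam \<tau> x0 \<xi>0 \<phi>)) = psido (scaled_symbol \<sigma> lam \<tau> x0 \<xi>0) \<phi>"
      using part1[of lam] H by (intro ext) auto
  next
    fix \<beta> :: "'n \<Rightarrow> nat"
    show "\<exists>C>0. \<forall>\<sigma> (lam::real) (\<tau>::real) (x0::real^'n) (\<xi>0::real^'n) (\<alpha>::'n \<Rightarrow> nat) x \<eta>.
            \<sigma> \<in> M_class 0 \<rho> \<Lambda> \<and> 1 \<le> lam \<and> 0 \<le> \<tau> \<and> \<tau> \<le> \<rho> * \<mu>0 / (1 + \<rho> * \<mu>0) \<and> \<xi>0 \<noteq> 0 \<longrightarrow>
            norm (sd \<alpha> \<beta> (scaled_symbol \<sigma> lam \<tau> x0 \<xi>0) x \<eta>)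
              \<le> C * seminorm_p \<Lambda> \<rho> \<alpha> \<beta> \<sigma>
                  * \<Lambda> \<eta> powr (\<rho> * real (mlen \<beta>)) / norm \<xi>0 powr (\<rho> * \<mu>0 * real (mlen \<beta>))
                  * lam powr (- \<tau> * real (mlen \<alpha>))
                  * lam powr (- (\<rho> * \<mu>0 - (1 + \<rho> * \<mu>0) * \<tau>) * real (mlen \<beta>))"
      using part2[OF weight rho(1)] C0
      by (intro exI[of _ "C0 powr (- 2 * \<rho> * real (mlen \<beta>))"]) auto
  qed
qed

end
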